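(* For all $n,k\in\mathbb N$, $t\in(0,1)$, and all $\alpha,\beta\subseteq\{1,\dots,n\}$, $$A_{n,k,t}[\alpha]\,A_{n,k,t}[\beta]\ \ge\ A_{n,k,t}[\alpha\cup\beta]\,A_{n,k,t}[\alpha\cap\beta],$$ and all principal minors of $A_{n,k,t}$ are positive.
   Context: For $x\in\mathbb R$, $x_+=\max\{x,0\}$. For $k\in\mathbb{N}$ and $t\in(0,1)$, $A_{\infty,k,t}=(A(i,j))_{i,j\ge1}$ is the infinite Toeplitz Hessenberg matrix with $A(i,j)=a_{j-i}$ for $j\ge i$, $A(i+1,i)=1$, and $A(i,j)=0$ for $i\ge j+2$, where $(a_0,a_1,\ldots)$ is the unique sequence for which the leading principal minors satisfy $\det A(\{1,\dots,n\})=t^{(n-k-1)_+}$ for all $n\in\mathbb N$. $A_{n,k,t}$ is the leading principal $n\times n$ submatrix of $A_{\infty,k,t}$. $A[\alpha]$ denotes the principal minor (determinant) of $A$ with rows and columns indexed by $\alpha$, with $A[\emptyset]=1$. *)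

theory Defs
  imports "Jordan_Normal_Form.DL_Submatrix" "Jordan_Normal_Form.Determinant"
begin

text \<open>Indices are 0-based: row/column i (0-based) corresponds to i+1 in the paper.\<close>
definition toeplitz_hess :: "(nat \<Rightarrow> real) \<Rightarrow> nat \<Rightarrow> real mat" where
  "toeplitz_hess a n = mat n n (\<lambda>(i,j). if i \<le> j then a (j - i) else if i = j + 1 then 1 else 0)"

text \<open>The unique sequence whose leading principal minors are t^((n-k-1)_+), n >= 1.
  Natural-number subtraction n - k - 1 is exactly (n-k-1)_+.\<close>
definition coeff_seq :: "nat \<Rightarrow> real \<Rightarrow> nat \<Rightarrow> real" where
  "coeff_seq k t = (THE a. \<forall>n\<ge>1. det (toeplitz_hess a n) = t ^ (n - k - 1))"

definition A_nkt :: "nat \<Rightarrow> nat \<Rightarrow> real \<Rightarrow> real mat" where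
  "A_nkt n k t = toeplitz_hess (coeff_seq k t) n"

definition pminor :: "real mat \<Rightarrow> nat set \<Rightarrow> real" where
  "pminor M \<alpha> = det (submatrix M \<alpha> \<alpha>)"

end

theory Submission
  imports Defs
begin


abbreviation H where "H \<equiv> toeplitz_hess"

lemma H_carrier: "H a n \<in> carrier_mat n n" unfolding toeplitz_hess_def by auto
lemma H_dim[simp]: "dim_row (H a n) = n" "dim_col (H a n) = n" unfolding toeplitz_hess_def by auto
lemma H_index[simp]: "i < n \<Longrightarrow> j < n \<Longrightarrow> H a n $$ (i,j) =
   (if i \<le> j then a (j-i) else if i = j+1 then 1 else 0)"
  unfolding toeplitz_hess_def by auto

lemma H_cong: "(\<And>j. j < n \<Longrightarrow> a j = b j) \<Longrightarrow> H a n = H b n"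
  by (rule eq_matI) auto

lemma cof_m: "cofactor (H a (Suc m)) 0 m = (-1)^m"
proof -
  let ?M = "mat_delete (H a (Suc m)) 0 m"
  have c: "?M \<in> carrier_mat m m" using mat_delete_carrier[OF H_carrier, of a "Suc m" 0 m] by simp
  have ut: "upper_triangular ?M"
    by (rule upper_triangularI) (auto simp: mat_delete_def)
  have "det ?M = prod_list (diag_mat ?M)" by (rule det_upper_triangular[OF ut c])
  also have "diag_mat ?M = map (\<lambda>_. 1) [0..<m]"
    using c by (auto simp: diag_mat_def mat_delete_def intro!: map_cong)
  also have "prod_list (map (\<lambda>_. 1::real) [0..<m]) = 1" by (induction m) auto
  finally show ?thesis by (simp add: cofactor_def)
qed

lemma cof_eq: assumes "\<And>j. j < m \<Longrightarrow> a j = b j"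
  shows "cofactor (H a (Suc m)) 0 j = cofactor (H b (Suc m)) 0 j"
proof -
  have "mat_delete (H a (Suc m)) 0 j = mat_delete (H b (Suc m)) 0 j"
    by (rule eq_matI) (auto simp: mat_delete_def assms)
  then show ?thesis by (simp add: cofactor_def)
qed

lemma L1: assumes "\<And>j. j < m \<Longrightarrow> a j = b j"
  shows "det (H a (Suc m)) - (-1)^m * a m = det (H b (Suc m)) - (-1)^m * b m"
proof -
  have e: "det (H c (Suc m)) = (\<Sum>j<m. c j * cofactor (H c (Suc m)) 0 j) + c m * (-1)^m" for c
    by (subst laplace_expansion_row[OF H_carrier, of 0]) (auto simp: cof_m)
  show ?thesis unfolding e using cof_eq[OF assms] assms by (simp add: mult.commute)
qed

lemma uniq:
  assumes "\<forall>n\<ge>1. det (H a n) = (g n :: real)" "\<forall>n\<ge>1. det (H b n) = g n"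
  shows "a = b"
proof -
  have "\<forall>j<m. a j = b j" for m
  proof (induction m)
    case 0 then show ?case by simp
  next
    case (Suc m)
    have "det (H a (Suc m)) - (-1)^m * a m = det (H b (Suc m)) - (-1)^m * b m"
      using L1 Suc by blast
    moreover have "det (H a (Suc m)) = det (H b (Suc m))" using assms by simp
    ultimately have "a m = b m" by simp
    with Suc show ?case using less_Suc_eq by auto
  qed
  then show ?thesis by blast
qed

primrec F :: "(nat \<Rightarrow> real) \<Rightarrow> nat \<Rightarrow> nat \<Rightarrow> real" where
  "F g 0 = (\<lambda>_. 0)"
| "F g (Suc m) = (F g m)(m := (-1)^m * (g (Suc m) - det (H (F g m) (Suc m))))"

lemma F_zero: "j \<ge> m \<Longrightarrow> F g m j = 0"
  by (induction m) auto

lemma F_stable: "j < m \<Longrightarrow> F g (m + d) j = F g m j"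
  by (induction d) auto

lemma F_stable': "j < m \<Longrightarrow> F g m j = F g (Suc j) j"
  using F_stable[of j "Suc j" g "m - Suc j"] by simp

lemma exist: "\<exists>a. \<forall>n\<ge>1. det (H a n) = (g n :: real)"
proof (intro exI allI impI)
  fix n :: nat assume "n \<ge> 1"
  then obtain m where n: "n = Suc m" by (cases n) auto
  let ?a = "\<lambda>i. F g (Suc i) i"
  have "H ?a (Suc m) = H (F g (Suc m)) (Suc m)"
    by (rule H_cong) (simp add: F_stable')
  moreover have "det (H (F g (Suc m)) (Suc m)) - (-1)^m * F g (Suc m) m
      = det (H (F g m) (Suc m)) - (-1)^m * F g m m"
    by (rule L1) simp
  moreover have "F g m m = 0" by (simp add: F_zero)
  moreover have "(-1::real)^m * (-1)^m = 1"
    by (metis power_mult_distrib mult_minus_left mult_minus_right minus_minus mult_1_left power_one)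
  ultimately have "det (H ?a (Suc m)) = g (Suc m)"
    by (simp add: algebra_simps)
  then show "det (H ?a n) = g n" using n by simp
qed

lemma coeff_prop: "det (H (coeff_seq k t) n) = t ^ (n - k - 1)"
proof (cases "n \<ge> 1")
  case True
  have "\<exists>!a. \<forall>n\<ge>1. det (H a n) = t ^ (n - k - 1)"
    using exist[of "\<lambda>n. t ^ (n - k - 1)"] uniq[of _ "\<lambda>n. t ^ (n - k - 1)"] by blast
  from theI'[OF this] True show ?thesis unfolding coeff_seq_def by blast
next
  case False
  then have "n = 0" by simp
  then show ?thesis by (simp add: det_dim_zero[OF H_carrier[of _ 0]])
qed



lemma block:
  fixes \<beta> :: "nat set"
  assumes B: "\<beta> \<subseteq> {0..<n}" and gap: "\<forall>x\<in>\<beta>. Suc x < c" and cm: "c \<le> m" and mn: "m < n"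
  shows "pminor (H a n) (\<beta> \<union> {c..m}) = pminor (H a n) \<beta> * det (H a (Suc m - c))"
proof -
  define S where "S = \<beta> \<union> {c..m}"
  define p where "p = card \<beta>"
  define L where "L = Suc m - c"
  have finB: "finite \<beta>" using B finite_subset by blast
  have disj: "\<beta> \<inter> {c..m} = {}" using gap by fastforce
  have cS: "card {i. i < dim_row (H a n) \<and> i \<in> S} = p + L"
  proof -
    have "{i. i < dim_row (H a n) \<and> i \<in> S} = S" using B mn cm by (auto simp: S_def)
    then show ?thesis using card_Un_disjoint[OF finB _ disj] by (simp add: S_def p_def L_def)
  qed
  have cB: "card {i. i < n \<and> i \<in> \<beta>} = p"
  proof -
    have "{i. i < n \<and> i \<in> \<beta>} = \<beta>" using B by auto
    then show ?thesis by (simp add: p_def)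
  qed
  have pick1: "pick S i = pick \<beta> i" if "i < p" for i
  proof -
    let ?x = "pick \<beta> i"
    have xB: "?x \<in> \<beta>" using pick_in_set[of i \<beta>] that p_def by blast
    have ci: "card {a\<in>\<beta>. a < ?x} = i" using card_pick[of i \<beta>] that p_def by blast
    have "{a\<in>S. a < ?x} = {a\<in>\<beta>. a < ?x}" using gap xB by (auto simp: S_def)
    moreover have "?x \<in> S" using xB by (simp add: S_def)
    ultimately have "pick S (card {a\<in>\<beta>. a < ?x}) = ?x" using pick_card_in_set[of ?x S] by simp
    then show ?thesis using ci by simp
  qed
  have pick2: "pick S (p + d) = c + d" if "d < L" for d
  proof -
    have "{a\<in>S. a < c + d} = \<beta> \<union> {c..<c+d}" using gap that by (auto simp: S_def L_def)
    moreover have "card (\<beta> \<union> {c..<c+d}) = p + d"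
      using card_Un_disjoint[OF finB, of "{c..<c+d}"] gap by (fastforce simp: p_def)
    moreover have "c + d \<in> S" using that by (auto simp: S_def L_def)
    ultimately show ?thesis using pick_card_in_set[of "c+d" S] by simp
  qed
  define A2 where "A2 = mat p L (\<lambda>(i,j). H a n $$ (pick \<beta> i, c + j))"
  have A1: "submatrix (H a n) \<beta> \<beta> \<in> carrier_mat p p"
    by (rule carrier_matI) (simp_all only: dim_submatrix H_dim cB)
  have dS: "dim_row (submatrix (H a n) S S) = p + L" "dim_col (submatrix (H a n) S S) = p + L"
    using cS by (simp_all only: dim_submatrix H_dim)
  have dB: "dim_row (submatrix (H a n) \<beta> \<beta>) = p" "dim_col (submatrix (H a n) \<beta> \<beta>) = p"
    using A1 by auto
  have eq: "submatrix (H a n) S S = four_block_mat (submatrix (H a n) \<beta> \<beta>) A2 (0\<^sub>m L p) (H a L)"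
  proof (rule eq_matI)
    show "dim_row (submatrix (H a n) S S) = dim_row (four_block_mat (submatrix (H a n) \<beta> \<beta>) A2 (0\<^sub>m L p) (H a L))"
      using dS dB by simp
    show "dim_col (submatrix (H a n) S S) = dim_col (four_block_mat (submatrix (H a n) \<beta> \<beta>) A2 (0\<^sub>m L p) (H a L))"
      using dS dB by simp
    fix i j assume ij: "i < dim_row (four_block_mat (submatrix (H a n) \<beta> \<beta>) A2 (0\<^sub>m L p) (H a L))"
      "j < dim_col (four_block_mat (submatrix (H a n) \<beta> \<beta>) A2 (0\<^sub>m L p) (H a L))"
    then have i: "i < p + L" and j: "j < p + L" using A1 by auto
    have lhs: "submatrix (H a n) S S $$ (i,j) = H a n $$ (pick S i, pick S j)"
      using submatrix_index[of i "H a n" S j S] cS i j by simp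
    have pBin: "pick \<beta> q \<in> \<beta>" if "q < p" for q using pick_in_set[of q \<beta>] that p_def by blast
    have pBn: "pick \<beta> q < n" if "q < p" for q using pBin[OF that] B by auto
    have pBc: "Suc (pick \<beta> q) < c" if "q < p" for q using pBin[OF that] gap by auto
    show "submatrix (H a n) S S $$ (i,j) = four_block_mat (submatrix (H a n) \<beta> \<beta>) A2 (0\<^sub>m L p) (H a L) $$ (i,j)"
    proof (cases "i < p")
      case True
      note iT = True
      show ?thesis
      proof (cases "j < p")
        case True
        have iB: "i < card {i. i < dim_row (H a n) \<and> i \<in> \<beta>}" by (simp only: H_dim cB iT)
        have jB: "j < card {i. i < dim_col (H a n) \<and> i \<in> \<beta>}" by (simp only: H_dim cB True)
        show ?thesis using iT True A1 lhs pick1 submatrix_index[OF iB jB] by simp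
      next
        case False
        then obtain d where d: "j = p + d" "d < L" using j by (metis add_diff_inverse_nat add_less_imp_less_left)
        then show ?thesis using iT A1 lhs pick1 pick2 by (simp add: A2_def)
      qed
    next
      case False
      then obtain e where e: "i = p + e" "e < L" using i by (metis add_diff_inverse_nat add_less_imp_less_left)
      have en: "c + e < n" using e mn by (simp add: L_def)
      show ?thesis
      proof (cases "j < p")
        case True
        then show ?thesis using e A1 lhs pick1 pick2 pBn[OF True] pBc[OF True] en by simp
      next
        case False
        then obtain d where d: "j = p + d" "d < L" using j by (metis add_diff_inverse_nat add_less_imp_less_left)
        have dn: "c + d < n" using d mn by (simp add: L_def)
        show ?thesis using e d A1 lhs pick2 en dn by auto
      qed
    qed
  qed
  have "det (submatrix (H a n) S S) = det (submatrix (H a n) \<beta> \<beta>) * det (H a L)"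
    unfolding eq by (rule det_four_block_mat_lower_left_zero[OF A1 _ refl H_carrier]) (simp add: A2_def)
  then show ?thesis by (simp add: pminor_def S_def L_def)
qed



definition win :: "nat \<Rightarrow> nat set \<Rightarrow> nat set" where
  "win k \<alpha> = {j. \<forall>i\<le>Suc k. j + i \<in> \<alpha>}"

lemma win_sub: "win k \<alpha> \<subseteq> \<alpha>"
  unfolding win_def by (auto dest: spec[of _ 0])

lemma win_split:
  assumes cm: "c \<le> m" and sub: "{c..m} \<subseteq> \<alpha>" and gapc: "0 < c \<Longrightarrow> c - 1 \<notin> \<alpha>"
    and mx: "\<forall>x\<in>\<alpha>. x \<le> m"
  shows "win k \<alpha> = win k {x\<in>\<alpha>. x < c} \<union> {c..<m - k}"
proof (intro equalityI subsetI)
  fix j assume j: "j \<in> win k \<alpha>"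
  then have ja: "\<And>i. i \<le> Suc k \<Longrightarrow> j + i \<in> \<alpha>" by (auto simp: win_def)
  show "j \<in> win k {x\<in>\<alpha>. x < c} \<union> {c..<m - k}"
  proof (cases "c \<le> j")
    case True
    have "j + Suc k \<le> m" using ja[of "Suc k"] mx by blast
    then show ?thesis using True by auto
  next
    case False
    have "j + i < c" if "i \<le> Suc k" for i
    proof (rule ccontr)
      assume "\<not> j + i < c"
      then have "c - 1 = j + (c - 1 - j)" "c - 1 - j \<le> Suc k" using False that by auto
      then have "c - 1 \<in> \<alpha>" using ja by metis
      then show False using gapc False by auto
    qed
    then have "j \<in> win k {x\<in>\<alpha>. x < c}" using ja by (auto simp: win_def)
    then show ?thesis by blast
  qed
next
  fix j assume "j \<in> win k {x\<in>\<alpha>. x < c} \<union> {c..<m - k}"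
  then show "j \<in> win k \<alpha>"
  proof
    assume "j \<in> win k {x\<in>\<alpha>. x < c}" then show ?thesis by (auto simp: win_def)
  next
    assume j: "j \<in> {c..<m - k}"
    have "j + i \<in> \<alpha>" if "i \<le> Suc k" for i
      using j that sub by (intro subsetD[OF sub]) auto
    then show ?thesis by (auto simp: win_def)
  qed
qed

lemma pminor_formula:
  assumes hD: "\<And>L. det (H a L) = (t::real) ^ (L - k - 1)"
  shows "\<alpha> \<subseteq> {0..<n} \<Longrightarrow> pminor (H a n) \<alpha> = t ^ card (win k \<alpha>)"
proof (induction "card \<alpha>" arbitrary: \<alpha> rule: less_induct)
  case less
  show ?case
  proof (cases "\<alpha> = {}")
    case True
    have "submatrix (H a n) \<alpha> \<alpha> \<in> carrier_mat 0 0"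
      unfolding True by (rule carrier_matI) (simp_all add: dim_submatrix)
    moreover have "win k \<alpha> = {}" using True win_sub by blast
    ultimately show ?thesis by (simp add: pminor_def)
  next
    case False
    have fin: "finite \<alpha>" using less.prems finite_subset by blast
    define m where "m = Max \<alpha>"
    have m\<alpha>: "m \<in> \<alpha>" using Max_in[OF fin False] m_def by simp
    have mx: "\<forall>x\<in>\<alpha>. x \<le> m" using Max_ge[OF fin] m_def by simp
    have mn: "m < n" using m\<alpha> less.prems by auto
    define c where "c = (LEAST c. {c..m} \<subseteq> \<alpha>)"
    have mm: "{m..m} \<subseteq> \<alpha>" using m\<alpha> by simp
    have sub: "{c..m} \<subseteq> \<alpha>" unfolding c_def by (rule LeastI[where P="\<lambda>c. {c..m} \<subseteq> \<alpha>", OF mm])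
    have cm: "c \<le> m" unfolding c_def by (rule Least_le[where P="\<lambda>c. {c..m} \<subseteq> \<alpha>", OF mm])
    have gapc: "c - 1 \<notin> \<alpha>" if "0 < c"
    proof
      assume "c - 1 \<in> \<alpha>"
      then have "{c - 1..m} \<subseteq> \<alpha>"
      proof -
        assume c1: "c - 1 \<in> \<alpha>"
        show ?thesis
        proof
          fix x assume "x \<in> {c - 1..m}"
          then show "x \<in> \<alpha>" using sub c1 by (cases "x = c - 1") auto
        qed
      qed
      then have "c \<le> c - 1" unfolding c_def by (rule Least_le[where P="\<lambda>c. {c..m} \<subseteq> \<alpha>"])
      then show False using that by simp
    qed
    define \<beta> where "\<beta> = {x\<in>\<alpha>. x < c}"
    have \<alpha>eq: "\<alpha> = \<beta> \<union> {c..m}" using sub mx by (auto simp: \<beta>_def)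
    have gap: "\<forall>x\<in>\<beta>. Suc x < c"
    proof
      fix x assume x: "x \<in> \<beta>"
      then have "x < c" "x \<in> \<alpha>" by (auto simp: \<beta>_def)
      then show "Suc x < c"
      proof -
        assume xc: "x < c" and xa: "x \<in> \<alpha>"
        show ?thesis
        proof (rule ccontr)
          assume "\<not> Suc x < c"
          then have "x = c - 1" "0 < c" using xc by auto
          then show False using gapc xa by auto
        qed
      qed
    qed
    have B: "\<beta> \<subseteq> {0..<n}" using less.prems by (auto simp: \<beta>_def)
    have "card \<beta> < card \<alpha>"
    proof (rule psubset_card_mono)
      show "finite \<alpha>" by (rule fin)
      have s1: "\<beta> \<subseteq> \<alpha>" unfolding \<beta>_def by blast
      have s2: "m \<notin> \<beta>" using cm unfolding \<beta>_def by simp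
      show "\<beta> \<subset> \<alpha>" using s1 s2 m\<alpha> by blast
    qed
    then have IH: "pminor (H a n) \<beta> = t ^ card (win k \<beta>)" using less.hyps B by blast
    have "pminor (H a n) \<alpha> = pminor (H a n) \<beta> * det (H a (Suc m - c))"
      unfolding \<alpha>eq by (rule block[OF B gap cm mn])
    also have "\<dots> = t ^ card (win k \<beta>) * t ^ (m - k - c)" using IH hD by (simp add: add.commute)
    also have "\<dots> = t ^ card (win k \<alpha>)"
    proof -
      have w: "win k \<alpha> = win k \<beta> \<union> {c..<m - k}"
        unfolding \<beta>_def by (rule win_split[OF cm sub gapc mx])
      have fw: "finite (win k \<beta>)" using win_sub B finite_subset by (metis finite_atLeastLessThan)
      have "win k \<beta> \<inter> {c..<m - k} = {}" using win_sub gap by fastforce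
      then have "card (win k \<alpha>) = card (win k \<beta>) + (m - k - c)"
        unfolding w using card_Un_disjoint[OF fw] by simp
      then show ?thesis by (simp add: power_add)
    qed
    finally show ?thesis .
  qed
qed


lemma win_fin: "finite \<alpha> \<Longrightarrow> finite (win k \<alpha>)"
  using win_sub finite_subset by blast

lemma win_int: "win k (\<alpha> \<inter> \<beta>) = win k \<alpha> \<inter> win k \<beta>"
  unfolding win_def by blast

lemma win_un: "win k \<alpha> \<union> win k \<beta> \<subseteq> win k (\<alpha> \<union> \<beta>)"
  unfolding win_def by blast

theorem mainTheorem3:
  fixes n k :: nat and t :: real
  assumes "0 < t" and "t < 1"
  shows "(\<forall>\<alpha> \<beta>. \<alpha> \<subseteq> {0..<n} \<longrightarrow> \<beta> \<subseteq> {0..<n} \<longrightarrow>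
            pminor (A_nkt n k t) \<alpha> * pminor (A_nkt n k t) \<beta>
              \<ge> pminor (A_nkt n k t) (\<alpha> \<union> \<beta>) * pminor (A_nkt n k t) (\<alpha> \<inter> \<beta>))
       \<and> (\<forall>\<alpha>. \<alpha> \<subseteq> {0..<n} \<longrightarrow> pminor (A_nkt n k t) \<alpha> > 0)"
proof -
  have PF: "pminor (A_nkt n k t) \<alpha> = t ^ card (win k \<alpha>)" if "\<alpha> \<subseteq> {0..<n}" for \<alpha>
    unfolding A_nkt_def by (rule pminor_formula[OF coeff_prop that])
  show ?thesis
  proof (intro conjI allI impI)
    fix \<alpha> assume "\<alpha> \<subseteq> {0..<n}"
    then show "pminor (A_nkt n k t) \<alpha> > 0" using PF assms by simp
  next
    fix \<alpha> \<beta> :: "nat set" assume a: "\<alpha> \<subseteq> {0..<n}" and b: "\<beta> \<subseteq> {0..<n}"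
    have u: "\<alpha> \<union> \<beta> \<subseteq> {0..<n}" and i: "\<alpha> \<inter> \<beta> \<subseteq> {0..<n}" using a b by auto
    have fa: "finite \<alpha>" and fb: "finite \<beta>" using a b finite_subset by blast+
    have fu: "finite (win k (\<alpha> \<union> \<beta>))" using fa fb by (simp add: win_fin)
    have "card (win k \<alpha>) + card (win k \<beta>) = card (win k \<alpha> \<union> win k \<beta>) + card (win k \<alpha> \<inter> win k \<beta>)"
      using card_Un_Int[OF win_fin[OF fa] win_fin[OF fb]] .
    also have "\<dots> \<le> card (win k (\<alpha> \<union> \<beta>)) + card (win k (\<alpha> \<inter> \<beta>))"
      using card_mono[OF fu win_un] win_int by simp
    finally have le: "card (win k \<alpha>) + card (win k \<beta>) \<le> card (win k (\<alpha> \<union> \<beta>)) + card (win k (\<alpha> \<inter> \<beta>))" .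
    have "t ^ (card (win k (\<alpha> \<union> \<beta>)) + card (win k (\<alpha> \<inter> \<beta>))) \<le> t ^ (card (win k \<alpha>) + card (win k \<beta>))"
      by (rule power_decreasing[OF le]) (use assms in auto)
    then show "pminor (A_nkt n k t) \<alpha> * pminor (A_nkt n k t) \<beta>
              \<ge> pminor (A_nkt n k t) (\<alpha> \<union> \<beta>) * pminor (A_nkt n k t) (\<alpha> \<inter> \<beta>)"
      using PF[OF a] PF[OF b] PF[OF u] PF[OF i] by (simp add: power_add)
  qed
qed

end
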